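(* Let $d\ge1$ and let $\mu={}^t(a_1,\dots,a_{2d+1})\in\mathbb{C}^{2d+1}$ be a unit vector with $|a_j|=|a_{d+1+j}|$ for $j=1,\dots,d$ and $a_{d+1}=0$. Let $C_\mu\phi=2\langle\phi,\mu\rangle\mu-\phi$. Then $U(S_{\rm lazy},\mathcal{P}_{\rm lazy},C_\mu)$ has both $1$ and $-1$ as eigenvalues.
   Context: $u_1,\dots,u_d$ standard basis of $\mathbb{Z}^d$, $\mathbf{e}_1,\dots,\mathbf{e}_{2d+1}$ standard basis of $\mathbb{C}^{2d+1}$, $P_j$ orthogonal projection onto $\mathbb{C}\mathbf{e}_j$. $S_{\rm lazy}=\{0,\pm u_1,\dots,\pm u_d\}$, $\mathcal{P}_{\rm lazy}=\{P_\alpha\}$ with $P_{u_j}=P_j$, $P_0=P_{d+1}$, $P_{-u_j}=P_{d+1+j}$. $(\tau^\alpha f)(x)=f(x-\alpha)$ on $\ell^2(\mathbb{Z}^d,\mathbb{C}^{2d+1})$, $U(S,\mathcal{P},C)=\big(\sum_{\alpha\in S}\tau^\alpha P_\alpha\big)C$ with $C$ acting pointwise; eigenvalue means point spectrum. Inner products are linear in the first argument. *)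

theory Defs
  imports "HOL-Analysis.Analysis"
begin

text \<open>Points of Z^d are functions nat => int vanishing outside {1..d};
 the basis vector u_j (j in {1..d}) is latunit j. Vectors of C^(2d+1) are functions
 nat => complex; only the components 1..2d+1 are meaningful (e_1,...,e_(2d+1)).\<close>

definition lattice :: "nat \<Rightarrow> (nat \<Rightarrow> int) set" where
  "lattice d = {x. \<forall>i. i \<notin> {1..d} \<longrightarrow> x i = 0}"

definition latunit :: "nat \<Rightarrow> nat \<Rightarrow> int" where
  "latunit j = (\<lambda>i. if i = j then 1 else 0)"

definition latzero :: "nat \<Rightarrow> int" where
  "latzero = (\<lambda>i. 0)"

definition latneg :: "(nat \<Rightarrow> int) \<Rightarrow> nat \<Rightarrow> int" where
  "latneg a = (\<lambda>i. - a i)"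

definition latminus :: "(nat \<Rightarrow> int) \<Rightarrow> (nat \<Rightarrow> int) \<Rightarrow> nat \<Rightarrow> int" where
  "latminus x a = (\<lambda>i. x i - a i)"

definition cinner :: "nat \<Rightarrow> (nat \<Rightarrow> complex) \<Rightarrow> (nat \<Rightarrow> complex) \<Rightarrow> complex" where
  "cinner d v w = (\<Sum>k\<in>{1..2*d+1}. v k * cnj (w k))"

definition proj :: "nat \<Rightarrow> (nat \<Rightarrow> complex) \<Rightarrow> nat \<Rightarrow> complex" where
  "proj j v = (\<lambda>k. if k = j then v k else 0)"

definition zeroop :: "(nat \<Rightarrow> complex) \<Rightarrow> nat \<Rightarrow> complex" where
  "zeroop v = (\<lambda>k. 0)"

definition S_lazy :: "nat \<Rightarrow> (nat \<Rightarrow> int) set" where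
  "S_lazy d = {latzero} \<union> {latunit j |j. j \<in> {1..d}} \<union> {latneg (latunit j) |j. j \<in> {1..d}}"

definition P_lazy :: "nat \<Rightarrow> (nat \<Rightarrow> int) \<Rightarrow> (nat \<Rightarrow> complex) \<Rightarrow> nat \<Rightarrow> complex" where
  "P_lazy d \<alpha> =
     (if \<alpha> = latzero then proj (d+1)
      else if (\<exists>j\<in>{1..d}. \<alpha> = latunit j) then proj (THE j. j \<in> {1..d} \<and> \<alpha> = latunit j)
      else if (\<exists>j\<in>{1..d}. \<alpha> = latneg (latunit j))
        then proj (d + 1 + (THE j. j \<in> {1..d} \<and> \<alpha> = latneg (latunit j)))
      else zeroop)"

definition l2space :: "nat \<Rightarrow> ((nat \<Rightarrow> int) \<Rightarrow> nat \<Rightarrow> complex) set" where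
  "l2space d = {f. (\<forall>x k. (x \<notin> lattice d \<or> k \<notin> {1..2*d+1}) \<longrightarrow> f x k = 0) \<and>
      (\<lambda>x. \<Sum>k\<in>{1..2*d+1}. (cmod (f x k))\<^sup>2) summable_on lattice d}"

definition Uop :: "nat \<Rightarrow> (nat \<Rightarrow> int) set \<Rightarrow> ((nat \<Rightarrow> int) \<Rightarrow> (nat \<Rightarrow> complex) \<Rightarrow> nat \<Rightarrow> complex)
     \<Rightarrow> ((nat \<Rightarrow> complex) \<Rightarrow> nat \<Rightarrow> complex)
     \<Rightarrow> ((nat \<Rightarrow> int) \<Rightarrow> nat \<Rightarrow> complex) \<Rightarrow> (nat \<Rightarrow> int) \<Rightarrow> nat \<Rightarrow> complex" where
  "Uop d S P C f = (\<lambda>x. if x \<in> lattice d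
       then (\<lambda>k. \<Sum>\<alpha>\<in>S. P \<alpha> (C (f (latminus x \<alpha>))) k) else (\<lambda>k. 0))"

definition coin :: "nat \<Rightarrow> (nat \<Rightarrow> complex) \<Rightarrow> (nat \<Rightarrow> complex) \<Rightarrow> nat \<Rightarrow> complex" where
  "coin d \<mu> \<phi> = (\<lambda>k. if k \<in> {1..2*d+1} then 2 * cinner d \<phi> \<mu> * \<mu> k - \<phi> k else 0)"

definition is_eigenvalue :: "nat \<Rightarrow> (((nat \<Rightarrow> int) \<Rightarrow> nat \<Rightarrow> complex) \<Rightarrow> (nat \<Rightarrow> int) \<Rightarrow> nat \<Rightarrow> complex)
     \<Rightarrow> complex \<Rightarrow> bool" where
  "is_eigenvalue d U c \<longleftrightarrow> (\<exists>f \<in> l2space d. f \<noteq> (\<lambda>x k. 0) \<and> U f = (\<lambda>x k. c * f x k))"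

end

theory Submission
  imports Defs
begin

lemma latunit_inj: "latunit i = latunit j \<Longrightarrow> i = j"
proof -
  assume "latunit i = latunit j"
  hence "latunit i i = latunit j i" by simp
  thus "i = j" unfolding latunit_def by (cases "i = j") simp_all
qed

lemma latunit_ne_zero: "latunit j \<noteq> latzero"
proof
  assume "latunit j = latzero"
  hence "latunit j j = latzero j" by simp
  thus False unfolding latunit_def latzero_def by simp
qed

lemma latneg_ne_zero: "latneg (latunit j) \<noteq> latzero"
proof
  assume "latneg (latunit j) = latzero"
  hence "latneg (latunit j) j = latzero j" by simp
  thus False unfolding latneg_def latunit_def latzero_def by simp
qed

lemma latneg_ne_unit: "latneg (latunit j) \<noteq> latunit i"
proof
  assume "latneg (latunit j) = latunit i"
  hence "latneg (latunit j) j = latunit i j" by simp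
  thus False unfolding latneg_def latunit_def by (cases "j = i") simp_all
qed

lemma latneg_inj: "latneg (latunit i) = latneg (latunit j) \<Longrightarrow> i = j"
proof -
  assume "latneg (latunit i) = latneg (latunit j)"
  hence "latneg (latunit i) i = latneg (latunit j) i" by simp
  thus "i = j" unfolding latneg_def latunit_def by (cases "i = j") simp_all
qed

lemma P0: "P_lazy d latzero = proj (d+1)"
  unfolding P_lazy_def by simp

lemma Pu: assumes "j \<in> {1..d}" shows "P_lazy d (latunit j) = proj j"
proof -
  have "(THE i. i \<in> {1..d} \<and> latunit j = latunit i) = j"
    by (rule the_equality) (use assms latunit_inj in auto)
  thus ?thesis unfolding P_lazy_def using assms latunit_ne_zero by auto
qed

lemma Pn: assumes "j \<in> {1..d}" shows "P_lazy d (latneg (latunit j)) = proj (d+1+j)"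
proof -
  have "(THE i. i \<in> {1..d} \<and> latneg (latunit j) = latneg (latunit i)) = j"
    by (rule the_equality) (use assms latneg_inj in auto)
  thus ?thesis unfolding P_lazy_def using assms latneg_ne_zero latneg_ne_unit by auto
qed

lemma sum_S:
  fixes h :: "(nat \<Rightarrow> int) \<Rightarrow> complex"
  shows "(\<Sum>\<alpha>\<in>S_lazy d. h \<alpha>) = h latzero + (\<Sum>j\<in>{1..d}. h (latunit j))
           + (\<Sum>j\<in>{1..d}. h (latneg (latunit j)))"
proof -
  have S: "S_lazy d = insert latzero (latunit ` {1..d} \<union> (\<lambda>j. latneg (latunit j)) ` {1..d})"
    unfolding S_lazy_def by auto
  have nz: "latzero \<notin> latunit ` {1..d} \<union> (\<lambda>j. latneg (latunit j)) ` {1..d}"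
    using latunit_ne_zero latneg_ne_zero by (metis (no_types, lifting) UnE imageE)
  have disj: "latunit ` {1..d} \<inter> (\<lambda>j. latneg (latunit j)) ` {1..d} = {}"
    using latneg_ne_unit by (metis (no_types, lifting) disjoint_iff imageE)
  have i1: "inj_on latunit {1..d}" by (meson inj_onI latunit_inj)
  have i2: "inj_on (\<lambda>j. latneg (latunit j)) {1..d}" by (meson inj_onI latneg_inj)
  show ?thesis
    unfolding S
    apply (subst sum.insert[OF _ nz], simp)
    apply (subst sum.union_disjoint[OF _ _ disj], simp, simp)
    apply (simp only: sum.reindex[OF i1] sum.reindex[OF i2] o_def add.assoc)
    done
qed

lemma latminus_zero: "latminus x latzero = x"
  unfolding latminus_def latzero_def by simp

lemma U_apply:
  "Uop d (S_lazy d) (P_lazy d) C f x k =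
    (if x \<in> lattice d then
       (if k = d+1 then C (f x) k else 0)
     + (if k \<in> {1..d} then C (f (latminus x (latunit k))) k else 0)
     + (if k \<in> {d+2..2*d+1} then C (f (latminus x (latneg (latunit (k-d-1))))) k else 0)
     else 0)"
proof (cases "x \<in> lattice d")
  case True
  have a: "(\<Sum>j\<in>{1..d}. P_lazy d (latunit j) (C (f (latminus x (latunit j)))) k)
        = (if k \<in> {1..d} then C (f (latminus x (latunit k))) k else 0)"
  proof -
    have "(\<Sum>j\<in>{1..d}. P_lazy d (latunit j) (C (f (latminus x (latunit j)))) k)
        = (\<Sum>j\<in>{1..d}. if j = k then C (f (latminus x (latunit j))) k else 0)"
      by (rule sum.cong) (auto simp: Pu proj_def)
    also have "\<dots> = (if k \<in> {1..d} then C (f (latminus x (latunit k))) k else 0)"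
      by (simp add: sum.delta)
    finally show ?thesis .
  qed
  have b: "(\<Sum>j\<in>{1..d}. P_lazy d (latneg (latunit j)) (C (f (latminus x (latneg (latunit j))))) k)
        = (if k \<in> {d+2..2*d+1} then C (f (latminus x (latneg (latunit (k-d-1))))) k else 0)"
  proof -
    have "(\<Sum>j\<in>{1..d}. P_lazy d (latneg (latunit j)) (C (f (latminus x (latneg (latunit j))))) k)
        = (\<Sum>j\<in>{1..d}. if j = k-d-1 then (if k \<ge> d+2 then C (f (latminus x (latneg (latunit (k-d-1))))) k else 0) else 0)"
    proof (rule sum.cong[OF refl])
      fix j assume j: "j \<in> {1..d}"
      show "P_lazy d (latneg (latunit j)) (C (f (latminus x (latneg (latunit j))))) k =
         (if j = k-d-1 then (if k \<ge> d+2 then C (f (latminus x (latneg (latunit (k-d-1))))) k else 0) else 0)"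
      proof (cases "k = d+1+j")
        case True
        then have "k-d-1 = j" "d+2 \<le> k" using j by auto
        then show ?thesis using True j by (simp add: Pn proj_def)
      next
        case False
        then have "\<not> (j = k-d-1 \<and> d+2 \<le> k)" by auto
        then show ?thesis using False j by (simp add: Pn proj_def)
      qed
    qed
    also have "\<dots> = (if k \<in> {d+2..2*d+1} then C (f (latminus x (latneg (latunit (k-d-1))))) k else 0)"
    proof -
      have e: "(k - d - 1 \<in> {1..d} \<and> d+2 \<le> k) = (k \<in> {d+2..2*d+1})" by auto
      show ?thesis by (subst sum.delta[OF finite_atLeastAtMost]) (simp only: e[symmetric] if_if_eq_conj)
    qed
    finally show ?thesis .
  qed
  have "Uop d (S_lazy d) (P_lazy d) C f x k = (\<Sum>\<alpha>\<in>S_lazy d. P_lazy d \<alpha> (C (f (latminus x \<alpha>))) k)"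
    using True by (simp add: Uop_def)
  also have "\<dots> = P_lazy d latzero (C (f (latminus x latzero))) k
     + (\<Sum>j\<in>{1..d}. P_lazy d (latunit j) (C (f (latminus x (latunit j)))) k)
     + (\<Sum>j\<in>{1..d}. P_lazy d (latneg (latunit j)) (C (f (latminus x (latneg (latunit j))))) k)"
    by (rule sum_S)
  also have "\<dots> = (if k = d+1 then C (f x) k else 0)
     + (if k \<in> {1..d} then C (f (latminus x (latunit k))) k else 0)
     + (if k \<in> {d+2..2*d+1} then C (f (latminus x (latneg (latunit (k-d-1))))) k else 0)"
    by (simp only: a b P0 latminus_zero proj_def)
  finally show ?thesis using True by (simp only: True if_True)
qed (simp add: Uop_def)

lemma sum_split:
  fixes h :: "nat \<Rightarrow> 'b::comm_monoid_add"
  shows "(\<Sum>k\<in>{1..2*d+1}. h k) = (\<Sum>j\<in>{1..d}. h j) + h (d+1) + (\<Sum>j\<in>{1..d}. h (d+1+j))"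
proof -
  have S: "{1..2*d+1} = {1..d} \<union> insert (d+1) ((\<lambda>j. d+1+j) ` {1..d})"
  proof (rule set_eqI)
    fix x
    show "x \<in> {1..2*d+1} \<longleftrightarrow> x \<in> {1..d} \<union> insert (d+1) ((\<lambda>j. d+1+j) ` {1..d})"
    proof
      assume x: "x \<in> {1..2*d+1}"
      show "x \<in> {1..d} \<union> insert (d+1) ((\<lambda>j. d+1+j) ` {1..d})"
      proof (cases "x \<le> d+1")
        case True then show ?thesis using x by auto
      next
        case False
        then have "x = d+1+(x-d-1)" "x-d-1 \<in> {1..d}" using x by auto
        then show ?thesis by blast
      qed
    qed auto
  qed
  have i: "inj_on (\<lambda>j. d+1+j) {1..d}" by (simp add: inj_on_def)
  have n: "d+1 \<notin> (\<lambda>j. d+1+j) ` {1..d}" by auto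
  have dj: "{1..d} \<inter> insert (d+1) ((\<lambda>j. d+1+j) ` {1..d}) = {}" by auto
  show ?thesis
    unfolding S
    apply (subst sum.union_disjoint[OF _ _ dj], simp, simp)
    apply (subst sum.insert[OF _ n], simp)
    apply (simp only: sum.reindex[OF i] o_def add.assoc)
    done
qed

definition cube :: "nat \<Rightarrow> (nat \<Rightarrow> int) set" where
  "cube d = {x. \<forall>i. (i \<in> {1..d} \<longrightarrow> x i = 0 \<or> x i = 1) \<and> (i \<notin> {1..d} \<longrightarrow> x i = 0)}"

lemma cube_lattice: "cube d \<subseteq> lattice d"
  unfolding cube_def lattice_def by auto

lemma finite_cube: "finite (cube d)"
proof -
  have "cube d \<subseteq> (\<lambda>g i. if i \<in> {1..d} then g i else 0) ` (PiE {1..d} (\<lambda>_. {0,1}))"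
  proof
    fix x assume x: "x \<in> cube d"
    have "restrict x {1..d} \<in> PiE {1..d} (\<lambda>_. {0,1})" using x unfolding cube_def by auto
    moreover have "x = (\<lambda>i. if i \<in> {1..d} then restrict x {1..d} i else 0)"
      using x unfolding cube_def by auto
    ultimately show "x \<in> (\<lambda>g i. if i \<in> {1..d} then g i else 0) ` (PiE {1..d} (\<lambda>_. {0,1}))"
      by blast
  qed
  moreover have "finite (PiE {1..d} (\<lambda>_. {0::int,1}))" by (rule finite_PiE) auto
  ultimately show ?thesis by (meson finite_imageI finite_subset)
qed

lemma l2_finite:
  assumes "finite F" "F \<subseteq> lattice d"
    and "\<And>x k. x \<notin> F \<or> k \<notin> {1..2*d+1} \<Longrightarrow> f x k = 0"
  shows "f \<in> l2space d"
  unfolding l2space_def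
proof (intro CollectI conjI allI impI)
  fix x k assume "x \<notin> lattice d \<or> k \<notin> {1..2*d+1}"
  then show "f x k = 0" using assms by blast
next
  show "(\<lambda>x. \<Sum>k\<in>{1..2*d+1}. (cmod (f x k))\<^sup>2) summable_on lattice d"
  proof (rule finite_nonzero_values_imp_summable_on)
    have "{x \<in> lattice d. (\<Sum>k\<in>{1..2*d+1}. (cmod (f x k))\<^sup>2) \<noteq> 0} \<subseteq> F"
    proof
      fix x assume x: "x \<in> {x \<in> lattice d. (\<Sum>k\<in>{1..2*d+1}. (cmod (f x k))\<^sup>2) \<noteq> 0}"
      show "x \<in> F"
      proof (rule ccontr)
        assume "x \<notin> F"
        then have "\<And>k. f x k = 0" using assms(3) by blast
        then show False using x by simp
      qed
    qed
    then show "finite {x \<in> lattice d. (\<Sum>k\<in>{1..2*d+1}. (cmod (f x k))\<^sup>2) \<noteq> 0}"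
      using assms(1) finite_subset by blast
  qed
qed

definition fminus :: "nat \<Rightarrow> (nat \<Rightarrow> int) \<Rightarrow> nat \<Rightarrow> complex" where
  "fminus d = (\<lambda>x k. if x = latzero \<and> k = d+1 then 1 else 0)"

lemma coin_fminus:
  assumes "a (d+1) = 0"
  shows "coin d a (fminus d y) k = (if y = latzero \<and> k = d+1 then -1 else 0)"
proof -
  have "cinner d (fminus d y) a = (\<Sum>k\<in>{1..2*d+1}. if k = d+1 then (if y = latzero then cnj (a k) else 0) else 0)"
    unfolding cinner_def fminus_def by (rule sum.cong) auto
  also have "\<dots> = 0" using assms by (subst sum.delta) auto
  finally have "cinner d (fminus d y) a = 0" .
  then show ?thesis unfolding coin_def fminus_def by auto
qed

lemma latzero_lattice: "latzero \<in> lattice d"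
  unfolding latzero_def lattice_def by simp

lemma eig_minus:
  assumes "a (d+1) = 0"
  shows "is_eigenvalue d (Uop d (S_lazy d) (P_lazy d) (coin d a)) (-1)"
  unfolding is_eigenvalue_def
proof (intro bexI conjI)
  show "fminus d \<in> l2space d"
  proof (rule l2_finite[of "{latzero}"])
    show "finite {latzero}" by simp
    show "{latzero} \<subseteq> lattice d" using latzero_lattice by simp
    fix x k assume h: "x \<notin> {latzero} \<or> k \<notin> {1..2*d+1}"
    show "fminus d x k = 0"
    proof (cases "x = latzero")
      case True
      then have "k \<noteq> d+1" using h by auto
      then show ?thesis unfolding fminus_def by simp
    next
      case False
      then show ?thesis unfolding fminus_def by simp
    qed
  qed
  show "fminus d \<noteq> (\<lambda>x k. 0)"
  proof
    assume "fminus d = (\<lambda>x k. 0)"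
    then have "fminus d latzero (d+1) = 0" by simp
    then show False unfolding fminus_def by simp
  qed
  show "Uop d (S_lazy d) (P_lazy d) (coin d a) (fminus d) = (\<lambda>x k. - 1 * fminus d x k)"
  proof (intro ext)
    fix x k
    show "Uop d (S_lazy d) (P_lazy d) (coin d a) (fminus d) x k = - 1 * fminus d x k"
    proof (cases "k = d+1")
      case True
      then show ?thesis unfolding U_apply coin_fminus[of a d, OF assms]
        using latzero_lattice[of d] by (simp add: fminus_def)
    next
      case False
      then show ?thesis unfolding U_apply coin_fminus[of a d, OF assms]
        by (simp add: fminus_def)
    qed
  qed
qed

definition fplus :: "nat \<Rightarrow> (nat \<Rightarrow> complex) \<Rightarrow> (nat \<Rightarrow> int) \<Rightarrow> nat \<Rightarrow> complex" where
  "fplus d a = (\<lambda>x k. if x \<in> cube d then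
      (if k \<in> {1..d} then (if x k = 1 then a k else 0)
       else if k \<in> {d+2..2*d+1} then (if x (k-d-1) = 0 then a k else 0) else 0) else 0)"

lemma half_sum:
  fixes a :: "nat \<Rightarrow> complex"
  assumes "(\<Sum>k\<in>{1..2*d+1}. (cmod (a k))\<^sup>2) = 1"
    and "\<forall>j\<in>{1..d}. cmod (a j) = cmod (a (d+1+j))"
    and "a (d+1) = 0"
  shows "(\<Sum>j\<in>{1..d}. (cmod (a j))\<^sup>2) = 1/2"
proof -
  have "(\<Sum>j\<in>{1..d}. (cmod (a (d+1+j)))\<^sup>2) = (\<Sum>j\<in>{1..d}. (cmod (a j))\<^sup>2)"
    using assms(2) by (intro sum.cong) auto
  then show ?thesis using assms(1) assms(3) unfolding sum_split[of "\<lambda>k. (cmod (a k))\<^sup>2"] by simp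
qed

lemma cinner_fplus:
  fixes a :: "nat \<Rightarrow> complex"
  assumes "(\<Sum>k\<in>{1..2*d+1}. (cmod (a k))\<^sup>2) = 1"
    and "\<forall>j\<in>{1..d}. cmod (a j) = cmod (a (d+1+j))"
    and "a (d+1) = 0"
  shows "cinner d (fplus d a y) a = (if y \<in> cube d then 1/2 else 0)"
proof (cases "y \<in> cube d")
  case False
  then show ?thesis unfolding cinner_def fplus_def by simp
next
  case True
  have t1: "(\<Sum>j\<in>{1..d}. fplus d a y j * cnj (a j)) = (\<Sum>j\<in>{1..d}. if y j = 1 then complex_of_real ((cmod (a j))\<^sup>2) else 0)"
  proof (rule sum.cong[OF refl])
    fix j assume j: "j \<in> {1..d}"
    have e: "fplus d a y j = (if y j = 1 then a j else 0)"
      using j True unfolding fplus_def by simp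
    show "fplus d a y j * cnj (a j) = (if y j = 1 then complex_of_real ((cmod (a j))\<^sup>2) else 0)"
      unfolding e by (simp only: complex_norm_square) simp
  qed
  have t2: "fplus d a y (d+1) = 0" unfolding fplus_def by simp
  have t3: "(\<Sum>j\<in>{1..d}. fplus d a y (d+1+j) * cnj (a (d+1+j))) = (\<Sum>j\<in>{1..d}. if y j = 0 then complex_of_real ((cmod (a j))\<^sup>2) else 0)"
  proof (rule sum.cong[OF refl])
    fix j assume j: "j \<in> {1..d}"
    have e: "fplus d a y (d+1+j) = (if y j = 0 then a (d+1+j) else 0)"
      using j True unfolding fplus_def by simp
    show "fplus d a y (d+1+j) * cnj (a (d+1+j)) = (if y j = 0 then complex_of_real ((cmod (a j))\<^sup>2) else 0)"
    proof -
      have "a (d+1+j) * cnj (a (d+1+j)) = complex_of_real ((cmod (a j))\<^sup>2)"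
        using assms(2) j by (simp only: complex_norm_square[symmetric])
      then show ?thesis unfolding e by simp
    qed
  qed
  have "cinner d (fplus d a y) a = (\<Sum>j\<in>{1..d}. (if y j = 1 then complex_of_real ((cmod (a j))\<^sup>2) else 0)
        + (if y j = 0 then complex_of_real ((cmod (a j))\<^sup>2) else 0))"
    unfolding cinner_def sum_split[of "\<lambda>k. fplus d a y k * cnj (a k)"] t1 t2 t3
    by (simp add: sum.distrib)
  also have "\<dots> = (\<Sum>j\<in>{1..d}. complex_of_real ((cmod (a j))\<^sup>2))"
  proof (rule sum.cong[OF refl])
    fix j assume j: "j \<in> {1..d}"
    then have "y j = 0 \<or> y j = 1" using True unfolding cube_def by auto
    then show "(if y j = 1 then complex_of_real ((cmod (a j))\<^sup>2) else 0)
        + (if y j = 0 then complex_of_real ((cmod (a j))\<^sup>2) else 0) = complex_of_real ((cmod (a j))\<^sup>2)"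
      by auto
  qed
  also have "\<dots> = complex_of_real (\<Sum>j\<in>{1..d}. (cmod (a j))\<^sup>2)" by simp
  also have "\<dots> = 1/2" by (simp only: half_sum[OF assms]) simp
  finally show ?thesis using True by simp
qed

lemma coin_fplus:
  fixes a :: "nat \<Rightarrow> complex"
  assumes "(\<Sum>k\<in>{1..2*d+1}. (cmod (a k))\<^sup>2) = 1"
    and "\<forall>j\<in>{1..d}. cmod (a j) = cmod (a (d+1+j))"
    and "a (d+1) = 0"
  shows "coin d a (fplus d a y) k = (if k \<in> {1..2*d+1} \<and> y \<in> cube d then a k - fplus d a y k else 0)"
proof (cases "y \<in> cube d")
  case True
  then show ?thesis unfolding coin_def cinner_fplus[OF assms] by simp
next
  case False
  then have "fplus d a y k = 0" unfolding fplus_def by simp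
  then show ?thesis using False unfolding coin_def cinner_fplus[OF assms] by simp
qed

lemma cube_iff: "x \<in> cube d \<longleftrightarrow> (\<forall>i. (i \<in> {1..d} \<longrightarrow> x i = 0 \<or> x i = 1) \<and> (i \<notin> {1..d} \<longrightarrow> x i = 0))"
  by (simp add: cube_def)

lemma shift_gen:
  fixes y x :: "nat \<Rightarrow> int" and c t :: int
  assumes k: "k \<in> {1..d}" and v: "\<And>i. y i = (if i = k then x i + c else x i)"
    and ct: "t + c \<in> {0,1}" and t01: "t \<in> {0,1}"
  shows "(y \<in> cube d \<and> y k \<noteq> 1 - (t + c)) \<longleftrightarrow> (x \<in> cube d \<and> x k = t)"
proof
  assume h: "y \<in> cube d \<and> y k \<noteq> 1 - (t + c)"
  have hc: "\<And>i. (i \<in> {1..d} \<longrightarrow> y i = 0 \<or> y i = 1) \<and> (i \<notin> {1..d} \<longrightarrow> y i = 0)"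
    using h unfolding cube_iff by blast
  have yk: "y k = 0 \<or> y k = 1" using hc[of k] k by blast
  have xk: "x k = t"
  proof -
    have "x k + c = 0 \<or> x k + c = 1" "x k + c \<noteq> 1 - (t + c)" using yk h v[of k] by auto
    then show ?thesis using ct by auto
  qed
  have "\<And>i. (i \<in> {1..d} \<longrightarrow> x i = 0 \<or> x i = 1) \<and> (i \<notin> {1..d} \<longrightarrow> x i = 0)"
  proof -
    fix i
    show "(i \<in> {1..d} \<longrightarrow> x i = 0 \<or> x i = 1) \<and> (i \<notin> {1..d} \<longrightarrow> x i = 0)"
    proof (cases "i = k")
      case True
      then show ?thesis using xk k t01 by auto
    next
      case False
      then show ?thesis using hc[of i] v[of i] by simp
    qed
  qed
  then show "x \<in> cube d \<and> x k = t" using xk unfolding cube_iff by blast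
next
  assume h: "x \<in> cube d \<and> x k = t"
  have hc: "\<And>i. (i \<in> {1..d} \<longrightarrow> x i = 0 \<or> x i = 1) \<and> (i \<notin> {1..d} \<longrightarrow> x i = 0)"
    using h unfolding cube_iff by blast
  have "\<And>i. (i \<in> {1..d} \<longrightarrow> y i = 0 \<or> y i = 1) \<and> (i \<notin> {1..d} \<longrightarrow> y i = 0)"
  proof -
    fix i
    show "(i \<in> {1..d} \<longrightarrow> y i = 0 \<or> y i = 1) \<and> (i \<notin> {1..d} \<longrightarrow> y i = 0)"
    proof (cases "i = k")
      case True
      then show ?thesis using h k ct v[of i] by auto
    next
      case False
      then show ?thesis using hc[of i] v[of i] by simp
    qed
  qed
  moreover have "y k \<noteq> 1 - (t + c)" using h v[of k] ct by auto
  ultimately show "y \<in> cube d \<and> y k \<noteq> 1 - (t + c)" unfolding cube_iff by blast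
qed

lemma shift_minus:
  assumes "k \<in> {1..d}"
  shows "(latminus x (latunit k) \<in> cube d \<and> latminus x (latunit k) k \<noteq> 1) \<longleftrightarrow> (x \<in> cube d \<and> x k = 1)"
proof -
  have v: "\<And>i. latminus x (latunit k) i = (if i = k then x i + (-1) else x i)"
    unfolding latminus_def latunit_def by simp
  show ?thesis using shift_gen[OF assms v, of 1] by simp
qed

lemma shift_plus:
  assumes "j \<in> {1..d}"
  shows "(latminus x (latneg (latunit j)) \<in> cube d \<and> latminus x (latneg (latunit j)) j \<noteq> 0) \<longleftrightarrow> (x \<in> cube d \<and> x j = 0)"
proof -
  have v: "\<And>i. latminus x (latneg (latunit j)) i = (if i = j then x i + 1 else x i)"
    unfolding latminus_def latneg_def latunit_def by simp
  show ?thesis using shift_gen[OF assms v, of 0] by simp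
qed

lemma eig_plus:
  fixes a :: "nat \<Rightarrow> complex"
  assumes A: "(\<Sum>k\<in>{1..2*d+1}. (cmod (a k))\<^sup>2) = 1"
    and B: "\<forall>j\<in>{1..d}. cmod (a j) = cmod (a (d+1+j))"
    and C: "a (d+1) = 0"
  shows "is_eigenvalue d (Uop d (S_lazy d) (P_lazy d) (coin d a)) 1"
  unfolding is_eigenvalue_def
proof (intro bexI conjI)
  have z: "\<And>x k. x \<notin> cube d \<Longrightarrow> fplus d a x k = 0" unfolding fplus_def by simp
  show "fplus d a \<in> l2space d"
  proof (rule l2_finite[OF finite_cube cube_lattice])
    fix x k assume h: "x \<notin> cube d \<or> k \<notin> {1..2*d+1}"
    show "fplus d a x k = 0"
    proof (cases "x \<in> cube d")
      case True
      then have k2: "k \<notin> {1..d}" and k3: "k \<notin> {d+2..2*d+1}" using h by auto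
      show ?thesis unfolding fplus_def
        by (simp only: if_not_P[OF k2] if_not_P[OF k3] if_cancel)
    qed (rule z)
  qed
  show "fplus d a \<noteq> (\<lambda>x k. 0)"
  proof
    assume h0: "fplus d a = (\<lambda>x k. 0)"
    have "\<exists>j\<in>{1..d}. a j \<noteq> 0"
    proof (rule ccontr)
      assume "\<not> (\<exists>j\<in>{1..d}. a j \<noteq> 0)"
      then have "(\<Sum>j\<in>{1..d}. (cmod (a j))\<^sup>2) = 0" by simp
      then show False using half_sum[OF A B C] by simp
    qed
    then obtain j where j: "j \<in> {1..d}" "a j \<noteq> 0" by blast
    have uc: "latunit j \<in> cube d" unfolding cube_def latunit_def using j by auto
    have "fplus d a (latunit j) j = a j" using uc j unfolding fplus_def latunit_def by simp
    then show False using h0 j by simp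
  qed
  show "Uop d (S_lazy d) (P_lazy d) (coin d a) (fplus d a) = (\<lambda>x k. 1 * fplus d a x k)"
  proof (intro ext)
    fix x k
    have cf: "\<And>y k. coin d a (fplus d a y) k = (if k \<in> {1..2*d+1} \<and> y \<in> cube d then a k - fplus d a y k else 0)"
      by (rule coin_fplus[OF A B C])
    have lat: "x \<notin> lattice d \<Longrightarrow> fplus d a x k = 0" using z cube_lattice by blast
    show "Uop d (S_lazy d) (P_lazy d) (coin d a) (fplus d a) x k = 1 * fplus d a x k"
    proof (cases "x \<in> lattice d")
      case False
      then show ?thesis unfolding U_apply using lat by simp
    next
      case True
      show ?thesis
      proof (cases "k = d+1")
        case k: True
        have "coin d a (fplus d a x) k = 0" unfolding cf using k C by (simp add: fplus_def)
        moreover have "fplus d a x k = 0" using k by (simp add: fplus_def)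
        ultimately show ?thesis unfolding U_apply using True k by simp
      next
        case k1: False
        show ?thesis
        proof (cases "k \<in> {1..d}")
          case k: True
          define y where "y = latminus x (latunit k)"
          have "coin d a (fplus d a y) k = (if y \<in> cube d \<and> y k \<noteq> 1 then a k else 0)"
            unfolding cf using k by (auto simp: fplus_def)
          also have "\<dots> = (if x \<in> cube d \<and> x k = 1 then a k else 0)"
            using shift_minus[OF k, of x] unfolding y_def by simp
          also have "\<dots> = fplus d a x k" using k by (simp add: fplus_def)
          finally have e: "coin d a (fplus d a y) k = fplus d a x k" .
          have "k \<notin> {d+2..2*d+1}" using k by auto
          then show ?thesis unfolding U_apply using True k k1 e y_def by simp
        next
          case k2: False
          show ?thesis
          proof (cases "k \<in> {d+2..2*d+1}")
            case k: True
            define j where "j = k-d-1"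
            have j: "j \<in> {1..d}" using k unfolding j_def by auto
            have kj: "k \<notin> {1..d}" "k \<in> {1..2*d+1}" using k by auto
            define y where "y = latminus x (latneg (latunit j))"
            have "coin d a (fplus d a y) k = (if y \<in> cube d \<and> y j \<noteq> 0 then a k else 0)"
              unfolding cf using k kj by (auto simp: fplus_def j_def)
            also have "\<dots> = (if x \<in> cube d \<and> x j = 0 then a k else 0)"
              using shift_plus[OF j, of x] unfolding y_def by simp
            also have "\<dots> = fplus d a x k" using k kj by (simp add: fplus_def j_def)
            finally have e: "coin d a (fplus d a y) k = fplus d a x k" .
            show ?thesis unfolding U_apply using True k k1 k2 e y_def j_def by simp
          next
            case k3: False
            have f0: "fplus d a x k = 0" unfolding fplus_def
              by (simp only: if_not_P[OF k2] if_not_P[OF k3] if_cancel)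
            show ?thesis unfolding U_apply
              by (simp only: if_not_P[OF k1] if_not_P[OF k2] if_not_P[OF k3] add_0 if_cancel f0 mult_zero_right)
          qed
        qed
      qed
    qed
  qed
qed

theorem theorem3p5:
  fixes d :: nat and a :: "nat \<Rightarrow> complex"
  assumes "d \<ge> 1"
    and "(\<Sum>k\<in>{1..2*d+1}. (cmod (a k))\<^sup>2) = 1"
    and "\<forall>j\<in>{1..d}. cmod (a j) = cmod (a (d+1+j))"
    and "a (d+1) = 0"
  shows "is_eigenvalue d (Uop d (S_lazy d) (P_lazy d) (coin d a)) 1
       \<and> is_eigenvalue d (Uop d (S_lazy d) (P_lazy d) (coin d a)) (-1)"
  using eig_plus[OF assms(2,3,4)] eig_minus[of a d, OF assms(4)] by simp

end
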